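(* Let $P$ be a program and $\sigma\in C_{\mathrm{Power}}(P)$ a Power computation. Then a load $(t,i)$ reads its value from a store $(t,i')$ via an early-read transition if and only if (1) $\sigma=\sigma_1\cdot(\mathrm{load},t,i,a)\cdot\sigma_2\cdot(\mathrm{commit},t,i',k,a)\cdot\sigma_3$ for some $k$ and some $i'\in\{1,\dots,i-1\}$, and (2) $\sigma_3$ contains no event of the form $(\mathrm{commit},t,j,k',a)$ with $j\in\{i'+1,\dots,i-1\}$ and arbitrary $k'$.
   Context: Programs. Fix a finite set $D$ of values, which also serve as addresses, with $0\in D$, and a finite set $\mathit{Reg}$ of registers taking values in $D$. Expressions are built from constants in $D$, registers, and functions over $D\cup\{\bot\}$ that return $\bot$ iff some argument is $\bot$. Commands are loads $r\leftarrow \mathrm{mem}[e]$, stores $\mathrm{mem}[e]\leftarrow e'$, assignments $r\leftarrow e$, and $\mathrm{assume}(e)$. A thread is a finite automaton whose transitions (instructions) are labeled by commands; a program is a finite sequence of threads with ids $1,\dots,|P|$. $(t,i)$ denotes the $i$-th fetched instruction of thread $t$. Power semantics. A state consists of, for each thread $t$, a runtime state $(F,C,L)$ ($F$ the sequence of fetched instructions, $C$ the set of committed indices, $L$ mapping each index to $\bot$ or to the store read by the load there: an initial store $\mathrm{init}_a$ of value $0$ to $a$, or a pair $(t',i')$), and a storage state $(co,prop)$ ($co$ assigns rational coherence keys to committed stores, initial stores have key $0$; $prop(t,a)$ is the last store to $a$ propagated to $t$, initially $\mathrm{init}_a$). Register values for instruction $(t,i)$ come from the latest earlier fetched assignment or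 load to the register ($0$ if none; a load gives $\bot$ if unsatisfied, $0$ if it read an initial store, else the value of the store read); $\mathrm{addr}$ and $\mathrm{val}$ denote evaluated address/value arguments. Address/data dependencies are earlier instructions an address/value depends on via registers; control dependencies are earlier assumes. Transitions: (fetch) append an instruction of $T_t$ continuing from the last fetched one's target state, event $(\mathrm{fetch},t,\text{instr})$; (load from memory) load $i$ with $L[i]=\bot$ and address $a\ne\bot$: $L[i]:=prop(t,a)$, event $(\mathrm{load},t,i,a)$; (early read) same event, if the greatest $i'<i$ that is a store with address in $\{a,\bot\}$ has address $a$, value $\ne\bot$ and is uncommitted: $L[i]:=(t,i')$; (commit) uncommitted $i$ with committed address/data/control dependencies, address and value $\ne\bot$, all earlier instructions with the same or unknown address committed, $L[i]\ne\bot$ for loads, value $\ne0$ for assumes: event $(\mathrm{commit},t,i)$; for a store additionally a fresh key $k$ is set as $co(t,i)$, event $(\mathrm{commit},t,i,k,a)$, immediately followed by propagation to $t$; (propagate) committed store $(t',i')$ to $a$ with $co(prop(t,a))<co(t',i')$: $prop(t,a):=(t',i')$, event $(\mathrm{prop},t,t',i',a)$. Final states: all fetched instructions committed; for loads $i'<i$ of a thread to the same address, $co(L[i'])\le co(L[i])$; for a store $i'$ and later load $i$ of a thread to the same address, $co(t,i')\le co(L[i])$. $C_{\mathrm{Power}}(P)$ is the set of event sequences leading from the initial state (nothing fetched) to a final state. *)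

theory Defs
  imports Complex_Main
begin

text \<open>A function over D extended strictly to D \<union> {bot} (bot iff some argument is bot)
  is determined by its restriction to D, which is what Fn stores.\<close>

datatype ('d,'r) expr = Const 'd | Reg 'r | Fn "'d list \<Rightarrow> 'd" "('d,'r) expr list"

fun eval :: "('r \<Rightarrow> 'd option) \<Rightarrow> ('d,'r) expr \<Rightarrow> 'd option" where
  "eval \<rho> (Const d) = Some d"
| "eval \<rho> (Reg r) = \<rho> r"
| "eval \<rho> (Fn f es) =
     (if (\<forall>e\<in>set es. eval \<rho> e \<noteq> None) then Some (f (map (\<lambda>e. the (eval \<rho> e)) es)) else None)"

fun regs :: "('d,'r) expr \<Rightarrow> 'r set" where
  "regs (Const d) = {}"
| "regs (Reg r) = {r}"
| "regs (Fn f es) = (\<Union>e\<in>set es. regs e)"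

datatype ('d,'r) cmd =
    Load 'r "('d,'r) expr"
  | Store "('d,'r) expr" "('d,'r) expr" \<comment> \<open>mem[e] <- e'\<close>
  | Assign 'r "('d,'r) expr"
  | Assume "('d,'r) expr"

type_synonym ('q,'d,'r) instr = "'q \<times> ('d,'r) cmd \<times> 'q"

record ('q,'d,'r) thread =
  tinit :: 'q
  ttrans :: "('q,'d,'r) instr set"

type_synonym ('q,'d,'r) program = "('q,'d,'r) thread list"

definition thr :: "('q,'d,'r) program \<Rightarrow> nat \<Rightarrow> ('q,'d,'r) thread" where
  "thr P t = P ! (t - 1)"

definition is_tid :: "('q,'d,'r) program \<Rightarrow> nat \<Rightarrow> bool" where
  "is_tid P t \<longleftrightarrow> 1 \<le> t \<and> t \<le> length P"

text \<open>Stores that a load may read: the initial store init_a, or a store (t',i').\<close>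
datatype 'd sref = Init 'd | St nat nat

record ('q,'d,'r) runtime =
  F :: "('q,'d,'r) instr list"     \<comment> \<open>fetched instructions; index i (1-based) is F ! (i-1)\<close>
  C :: "nat set"
  L :: "nat \<Rightarrow> 'd sref option"     \<comment> \<open>None = unsatisfied (bot)\<close>

record ('q,'d,'r) pstate =
  rt :: "nat \<Rightarrow> ('q,'d,'r) runtime"
  co :: "nat \<times> nat \<Rightarrow> rat option"     \<comment> \<open>coherence keys of committed stores\<close>
  prp :: "nat \<Rightarrow> 'd \<Rightarrow> 'd sref"

datatype ('q,'d,'r) event =
    EFetch nat "('q,'d,'r) instr"
  | ELoad nat nat 'd
  | ECommit nat nat
  | ECommitSt nat nat rat 'd
  | EProp nat nat nat 'd

definition nF :: "('q,'d,'r) pstate \<Rightarrow> nat \<Rightarrow> nat" where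
  "nF s t = length (F (rt s t))"

definition valid_idx :: "('q,'d,'r) pstate \<Rightarrow> nat \<Rightarrow> nat \<Rightarrow> bool" where
  "valid_idx s t i \<longleftrightarrow> 1 \<le> i \<and> i \<le> nF s t"

definition cmd_of :: "('q,'d,'r) pstate \<Rightarrow> nat \<Rightarrow> nat \<Rightarrow> ('d,'r) cmd" where
  "cmd_of s t i = fst (snd (F (rt s t) ! (i - 1)))"

fun writes :: "'r \<Rightarrow> ('d,'r) cmd \<Rightarrow> bool" where
  "writes r (Load r' e) = (r' = r)"
| "writes r (Assign r' e) = (r' = r)"
| "writes r _ = False"

fun is_load :: "('d,'r) cmd \<Rightarrow> bool" where
  "is_load (Load r e) = True" | "is_load _ = False"
fun is_store :: "('d,'r) cmd \<Rightarrow> bool" where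
  "is_store (Store e e') = True" | "is_store _ = False"
fun is_assume :: "('d,'r) cmd \<Rightarrow> bool" where
  "is_assume (Assume e) = True" | "is_assume _ = False"
definition is_mem :: "('d,'r) cmd \<Rightarrow> bool" where
  "is_mem c \<longleftrightarrow> is_load c \<or> is_store c"

definition provider :: "('q,'d,'r) pstate \<Rightarrow> nat \<Rightarrow> nat \<Rightarrow> 'r \<Rightarrow> nat option" where
  "provider s t i r =
     (if \<exists>j. valid_idx s t j \<and> j < i \<and> writes r (cmd_of s t j)
      then Some (GREATEST j. valid_idx s t j \<and> j < i \<and> writes r (cmd_of s t j))
      else None)"

text \<open>Register values, computed with a fuel bound (the dependency chains in any
  reachable state are acyclic and shorter than the number of fetched instructions;
  running out of fuel yields bot).\<close>
primrec regval :: "nat \<Rightarrow> ('q,'d::zero,'r) pstate \<Rightarrow> nat \<Rightarrow> nat \<Rightarrow> 'r \<Rightarrow> 'd option" where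
  "regval 0 s t i r = None"
| "regval (Suc n) s t i r =
     (case provider s t i r of
        None \<Rightarrow> Some 0
      | Some j \<Rightarrow>
          (case cmd_of s t j of
             Assign r' e \<Rightarrow> eval (regval n s t j) e
           | Load r' e \<Rightarrow>
               (case L (rt s t) j of
                  None \<Rightarrow> None
                | Some (Init a) \<Rightarrow> Some 0
                | Some (St t' i') \<Rightarrow>
                    (case cmd_of s t' i' of
                       Store ea ev \<Rightarrow> eval (regval n s t' i') ev
                     | _ \<Rightarrow> None))
           | _ \<Rightarrow> None))"

definition fuel :: "('q,'d,'r) program \<Rightarrow> ('q,'d,'r) pstate \<Rightarrow> nat" where
  "fuel P s = Suc (\<Sum>t=1..length P. nF s t)"

definition rv :: "('q,'d::zero,'r) program \<Rightarrow> ('q,'d,'r) pstate \<Rightarrow> nat \<Rightarrow> nat \<Rightarrow> 'r \<Rightarrow> 'd option" where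
  "rv P s t i = regval (fuel P s) s t i"

text \<open>addr: evaluated address argument (None = bot, also for non-memory instructions).\<close>
definition addr :: "('q,'d::zero,'r) program \<Rightarrow> ('q,'d,'r) pstate \<Rightarrow> nat \<Rightarrow> nat \<Rightarrow> 'd option" where
  "addr P s t i =
     (case cmd_of s t i of
        Load r e \<Rightarrow> eval (rv P s t i) e
      | Store e e' \<Rightarrow> eval (rv P s t i) e
      | _ \<Rightarrow> None)"

text \<open>val: evaluated value argument (for a load: the value it read, bot if unsatisfied).\<close>
definition val :: "('q,'d::zero,'r) program \<Rightarrow> ('q,'d,'r) pstate \<Rightarrow> nat \<Rightarrow> nat \<Rightarrow> 'd option" where
  "val P s t i =
     (case cmd_of s t i of
        Store e e' \<Rightarrow> eval (rv P s t i) e'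
      | Assign r e \<Rightarrow> eval (rv P s t i) e
      | Assume e \<Rightarrow> eval (rv P s t i) e
      | Load r e \<Rightarrow>
          (case L (rt s t) i of
             None \<Rightarrow> None
           | Some (Init a) \<Rightarrow> Some 0
           | Some (St t' i') \<Rightarrow>
               (case cmd_of s t' i' of
                  Store ea ev \<Rightarrow> eval (rv P s t' i') ev
                | _ \<Rightarrow> None)))"

definition expr_deps :: "('q,'d,'r) pstate \<Rightarrow> nat \<Rightarrow> nat \<Rightarrow> ('d,'r) expr \<Rightarrow> nat set" where
  "expr_deps s t i e = {j. \<exists>r\<in>regs e. provider s t i r = Some j}"

definition addr_deps :: "('q,'d,'r) pstate \<Rightarrow> nat \<Rightarrow> nat \<Rightarrow> nat set" where
  "addr_deps s t i =
     (case cmd_of s t i of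
        Load r e \<Rightarrow> expr_deps s t i e
      | Store e e' \<Rightarrow> expr_deps s t i e
      | _ \<Rightarrow> {})"

definition data_deps :: "('q,'d,'r) pstate \<Rightarrow> nat \<Rightarrow> nat \<Rightarrow> nat set" where
  "data_deps s t i =
     (case cmd_of s t i of
        Store e e' \<Rightarrow> expr_deps s t i e'
      | Assign r e \<Rightarrow> expr_deps s t i e
      | Assume e \<Rightarrow> expr_deps s t i e
      | _ \<Rightarrow> {})"

definition ctrl_deps :: "('q,'d,'r) pstate \<Rightarrow> nat \<Rightarrow> nat \<Rightarrow> nat set" where
  "ctrl_deps s t i = {j. valid_idx s t j \<and> j < i \<and> is_assume (cmd_of s t j)}"

fun co_of :: "('q,'d,'r) pstate \<Rightarrow> 'd sref \<Rightarrow> rat" where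
  "co_of s (Init a) = 0"
| "co_of s (St t i) = the (co s (t, i))"

definition commit_enabled :: "('q,'d::zero,'r) program \<Rightarrow> ('q,'d,'r) pstate \<Rightarrow> nat \<Rightarrow> nat \<Rightarrow> bool" where
  "commit_enabled P s t i \<longleftrightarrow>
     is_tid P t \<and> valid_idx s t i \<and> i \<notin> C (rt s t) \<and>
     addr_deps s t i \<union> data_deps s t i \<union> ctrl_deps s t i \<subseteq> C (rt s t) \<and>
     (is_mem (cmd_of s t i) \<longrightarrow> addr P s t i \<noteq> None) \<and>
     val P s t i \<noteq> None \<and>
     (is_mem (cmd_of s t i) \<longrightarrow>
        (\<forall>j. valid_idx s t j \<and> j < i \<and> is_mem (cmd_of s t j) \<and>
             (addr P s t j = addr P s t i \<or> addr P s t j = None) \<longrightarrow> j \<in> C (rt s t))) \<and>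
     (is_load (cmd_of s t i) \<longrightarrow> L (rt s t) i \<noteq> None) \<and>
     (is_assume (cmd_of s t i) \<longrightarrow> val P s t i \<noteq> Some 0)"

definition upd_rt :: "('q,'d,'r) pstate \<Rightarrow> nat \<Rightarrow> ('q,'d,'r) runtime \<Rightarrow> ('q,'d,'r) pstate" where
  "upd_rt s t r = s\<lparr>rt := (rt s)(t := r)\<rparr>"

definition last_target :: "('q,'d,'r) program \<Rightarrow> ('q,'d,'r) pstate \<Rightarrow> nat \<Rightarrow> 'q" where
  "last_target P s t =
     (if F (rt s t) = [] then tinit (thr P t) else snd (snd (last (F (rt s t)))))"

definition load_mem_step ::
  "('q,'d::zero,'r) program \<Rightarrow> ('q,'d,'r) pstate \<Rightarrow> nat \<Rightarrow> nat \<Rightarrow> 'd \<Rightarrow> ('q,'d,'r) pstate \<Rightarrow> bool" where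
  "load_mem_step P s t i a s' \<longleftrightarrow>
     is_tid P t \<and> valid_idx s t i \<and> is_load (cmd_of s t i) \<and> L (rt s t) i = None \<and>
     addr P s t i = Some a \<and>
     s' = upd_rt s t ((rt s t)\<lparr>L := (L (rt s t))(i := Some (prp s t a))\<rparr>)"

definition early_read_step ::
  "('q,'d::zero,'r) program \<Rightarrow> ('q,'d,'r) pstate \<Rightarrow> nat \<Rightarrow> nat \<Rightarrow> 'd \<Rightarrow> nat \<Rightarrow> ('q,'d,'r) pstate \<Rightarrow> bool" where
  "early_read_step P s t i a i' s' \<longleftrightarrow>
     is_tid P t \<and> valid_idx s t i \<and> is_load (cmd_of s t i) \<and> L (rt s t) i = None \<and>
     addr P s t i = Some a \<and>
     valid_idx s t i' \<and> i' < i \<and> is_store (cmd_of s t i') \<and>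
     (\<forall>j. i' < j \<and> j < i \<and> is_store (cmd_of s t j) \<longrightarrow>
          addr P s t j \<noteq> Some a \<and> addr P s t j \<noteq> None) \<and>
     addr P s t i' = Some a \<and> val P s t i' \<noteq> None \<and> i' \<notin> C (rt s t) \<and>
     s' = upd_rt s t ((rt s t)\<lparr>L := (L (rt s t))(i := Some (St t i'))\<rparr>)"

inductive step :: "('q,'d::zero,'r) program \<Rightarrow> ('q,'d,'r) pstate \<Rightarrow> ('q,'d,'r) event \<Rightarrow> ('q,'d,'r) pstate \<Rightarrow> bool"
  for P where
  fetch: "\<lbrakk> is_tid P t; ins \<in> ttrans (thr P t); fst ins = last_target P s t \<rbrakk>
          \<Longrightarrow> step P s (EFetch t ins) (upd_rt s t ((rt s t)\<lparr>F := F (rt s t) @ [ins]\<rparr>))"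
| load_mem: "load_mem_step P s t i a s' \<Longrightarrow> step P s (ELoad t i a) s'"
| early_read: "early_read_step P s t i a i' s' \<Longrightarrow> step P s (ELoad t i a) s'"
| commit: "\<lbrakk> commit_enabled P s t i; \<not> is_store (cmd_of s t i) \<rbrakk>
          \<Longrightarrow> step P s (ECommit t i) (upd_rt s t ((rt s t)\<lparr>C := insert i (C (rt s t))\<rparr>))"
| commit_store: "\<lbrakk> commit_enabled P s t i; is_store (cmd_of s t i); addr P s t i = Some a;
                  k \<noteq> 0; k \<notin> ran (co s); co_of s (prp s t a) < k \<rbrakk>
          \<Longrightarrow> step P s (ECommitSt t i k a)
                (s\<lparr>rt := (rt s)(t := (rt s t)\<lparr>C := insert i (C (rt s t))\<rparr>),
                   co := (co s)((t, i) := Some k),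
                   prp := (prp s)(t := (prp s t)(a := St t i))\<rparr>)"
| propagate: "\<lbrakk> is_tid P t; is_tid P t'; valid_idx s t' i'; i' \<in> C (rt s t');
               is_store (cmd_of s t' i'); addr P s t' i' = Some a;
               co_of s (prp s t a) < co_of s (St t' i') \<rbrakk>
          \<Longrightarrow> step P s (EProp t t' i' a) (s\<lparr>prp := (prp s)(t := (prp s t)(a := St t' i'))\<rparr>)"

definition init_state :: "('q,'d,'r) pstate" where
  "init_state = \<lparr>rt = (\<lambda>t. \<lparr>F = [], C = {}, L = (\<lambda>i. None)\<rparr>),
                 co = (\<lambda>x. None), prp = (\<lambda>t a. Init a)\<rparr>"

definition final :: "('q,'d::zero,'r) program \<Rightarrow> ('q,'d,'r) pstate \<Rightarrow> bool" where
  "final P s \<longleftrightarrow> (\<forall>t. is_tid P t \<longrightarrow>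
     (\<forall>i. valid_idx s t i \<longrightarrow> i \<in> C (rt s t)) \<and>
     (\<forall>i' i. valid_idx s t i' \<and> valid_idx s t i \<and> i' < i \<and>
        is_load (cmd_of s t i') \<and> is_load (cmd_of s t i) \<and> addr P s t i' = addr P s t i \<longrightarrow>
        co_of s (the (L (rt s t) i')) \<le> co_of s (the (L (rt s t) i))) \<and>
     (\<forall>i' i. valid_idx s t i' \<and> valid_idx s t i \<and> i' < i \<and>
        is_store (cmd_of s t i') \<and> is_load (cmd_of s t i) \<and> addr P s t i' = addr P s t i \<longrightarrow>
        co_of s (St t i') \<le> co_of s (the (L (rt s t) i))))"

definition is_run :: "('q,'d::zero,'r) program \<Rightarrow> ('q,'d,'r) pstate list \<Rightarrow> ('q,'d,'r) event list \<Rightarrow> bool" where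
  "is_run P ss \<sigma> \<longleftrightarrow> length ss = Suc (length \<sigma>) \<and> ss ! 0 = init_state \<and>
     (\<forall>n < length \<sigma>. step P (ss ! n) (\<sigma> ! n) (ss ! Suc n))"

definition C_Power :: "('q,'d::zero,'r) program \<Rightarrow> ('q,'d,'r) event list set" where
  "C_Power P = {\<sigma>. \<exists>ss. is_run P ss \<sigma> \<and> final P (last ss)}"

definition reads_early :: "('q,'d::zero,'r) program \<Rightarrow> ('q,'d,'r) pstate list \<Rightarrow> ('q,'d,'r) event list
     \<Rightarrow> nat \<Rightarrow> nat \<Rightarrow> nat \<Rightarrow> bool" where
  "reads_early P ss \<sigma> t i i' \<longleftrightarrow>
     (\<exists>n < length \<sigma>. \<exists>a. \<sigma> ! n = ELoad t i a \<and> early_read_step P (ss ! n) t i a i' (ss ! Suc n))"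

end

theory Submission
  imports Defs
begin

lemma eval_mono:
  assumes "\<And>r v. \<rho> r = Some v \<Longrightarrow> \<rho>' r = Some v"
  shows "eval \<rho> e = Some v \<Longrightarrow> eval \<rho>' e = Some v"
proof (induction e arbitrary: v)
  case (Const d) then show ?case by simp
next
  case (Reg r) then show ?case using assms by simp
next
  case (Fn f es)
  from Fn.prems have all: "\<forall>e\<in>set es. eval \<rho> e \<noteq> None"
    and v: "v = f (map (\<lambda>e. the (eval \<rho> e)) es)" by (auto split: if_splits)
  have eq: "\<forall>e\<in>set es. eval \<rho>' e = eval \<rho> e" using Fn.IH all by fastforce
  hence m: "map (\<lambda>e. the (eval \<rho>' e)) es = map (\<lambda>e. the (eval \<rho> e)) es" by simp
  have "eval \<rho>' (Fn f es) = Some (f (map (\<lambda>e. the (eval \<rho>' e)) es))" using all eq by simp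
  then show ?case using m v by simp
qed

definition ext :: "('q,'d,'r) pstate \<Rightarrow> ('q,'d,'r) pstate \<Rightarrow> bool" where
  "ext s s' \<longleftrightarrow> (\<forall>t. nF s t \<le> nF s' t) \<and>
     (\<forall>t i. valid_idx s t i \<longrightarrow> cmd_of s' t i = cmd_of s t i) \<and>
     (\<forall>t i x. L (rt s t) i = Some x \<longrightarrow> L (rt s' t) i = Some x) \<and>
     (\<forall>t. C (rt s t) \<subseteq> C (rt s' t)) \<and> co s \<subseteq>\<^sub>m co s'"

lemma ext_refl: "ext s s" by (simp add: ext_def)

lemma ext_trans: "ext s1 s2 \<Longrightarrow> ext s2 s3 \<Longrightarrow> ext s1 s3"
  unfolding ext_def valid_idx_def
  by (smt (verit, ccfv_threshold) dual_order.trans map_le_trans subset_trans)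

lemma ext_valid: "ext s s' \<Longrightarrow> valid_idx s t i \<Longrightarrow> valid_idx s' t i"
  unfolding ext_def valid_idx_def by (meson order_trans)

definition I1 :: "('q,'d,'r) pstate \<Rightarrow> bool" where
  "I1 s \<longleftrightarrow> (\<forall>t i t' i'. L (rt s t) i = Some (St t' i') \<longrightarrow> valid_idx s t' i' \<and> is_store (cmd_of s t' i'))"

lemma provider_ext:
  assumes "ext s s'" "valid_idx s t i"
  shows "provider s' t i r = provider s t i r"
proof -
  have eqs: "\<And>j. (valid_idx s' t j \<and> j < i \<and> writes r (cmd_of s' t j)) = (valid_idx s t j \<and> j < i \<and> writes r (cmd_of s t j))"
    using assms unfolding ext_def valid_idx_def by (metis less_imp_le_nat order_trans)
  show ?thesis unfolding provider_def eqs by (rule refl)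
qed

lemma provider_Some:
  assumes "provider s t i r = Some j"
  shows "valid_idx s t j \<and> j < i \<and> writes r (cmd_of s t j)"
proof -
  from assms have ex: "\<exists>j. valid_idx s t j \<and> j < i \<and> writes r (cmd_of s t j)"
    and jd: "j = (GREATEST j. valid_idx s t j \<and> j < i \<and> writes r (cmd_of s t j))"
    unfolding provider_def by (auto split: if_splits)
  from ex obtain j0 where "valid_idx s t j0 \<and> j0 < i \<and> writes r (cmd_of s t j0)" by blast
  then show ?thesis unfolding jd
    by (rule GreatestI_nat[where b=i]) auto
qed

lemma regval_fuel_Suc:
  "regval n s t i r = Some v \<Longrightarrow> regval (Suc n) s t i r = Some v"
proof (induction n arbitrary: t i r v)
  case 0 then show ?case by simp
next
  case (Suc n)
  note IH = Suc.IH
  show ?case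
  proof (cases "provider s t i r")
    case None then show ?thesis using Suc.prems by simp
  next
    case (Some j)
    have ev: "\<And>t' i' e v. eval (regval n s t' i') e = Some v \<Longrightarrow> eval (regval (Suc n) s t' i') e = Some v"
      by (rule eval_mono) (use IH in auto)
    show ?thesis using Suc.prems Some ev
      by (auto split: cmd.splits option.splits sref.splits)
  qed
qed

lemma regval_fuel:
  assumes "regval n s t i r = Some v" "n \<le> m" shows "regval m s t i r = Some v"
  using assms(2) by (induction m rule: dec_induct) (fact assms(1), erule regval_fuel_Suc)

lemma regval_ext:
  assumes "ext s s'" "I1 s"
  shows "valid_idx s t i \<Longrightarrow> regval n s t i r = Some v \<Longrightarrow> regval n s' t i r = Some v"
proof (induction n arbitrary: t i r v)
  case 0 then show ?case by simp
next
  case (Suc n)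
  note IH = Suc.IH
  have pe: "provider s' t i r = provider s t i r" by (rule provider_ext[OF assms(1) Suc.prems(1)])
  show ?case
  proof (cases "provider s t i r")
    case None then show ?thesis using Suc.prems pe by simp
  next
    case (Some j)
    from provider_Some[OF Some] have vj: "valid_idx s t j" by blast
    have cj: "cmd_of s' t j = cmd_of s t j" using assms(1) vj unfolding ext_def by blast
    have ev: "\<And>t' i' e v. valid_idx s t' i' \<Longrightarrow> eval (regval n s t' i') e = Some v \<Longrightarrow> eval (regval n s' t' i') e = Some v"
      by (rule eval_mono) (use IH in auto)
    have Lm: "\<And>x. L (rt s t) j = Some x \<Longrightarrow> L (rt s' t) j = Some x" using assms(1) unfolding ext_def by blast
    have st: "\<And>t' i'. L (rt s t) j = Some (St t' i') \<Longrightarrow> valid_idx s t' i' \<and> cmd_of s' t' i' = cmd_of s t' i'"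
      using assms unfolding I1_def ext_def by blast
    show ?thesis
    proof (cases "cmd_of s t j")
      case (Load r' e)
      show ?thesis
      proof (cases "L (rt s t) j")
        case None then show ?thesis using Suc.prems Some Load by simp
      next
        case (Some x)
        note Sx = Some
        show ?thesis
        proof (cases x)
          case (Init a) then show ?thesis using Suc.prems \<open>provider s t i r = Some j\<close> pe cj Load Sx Lm by simp
        next
          case (St t' i')
          then show ?thesis using Suc.prems \<open>provider s t i r = Some j\<close> pe cj Load Sx Lm[OF Sx] st[of t' i'] ev[of t' i']
            by (auto split: cmd.splits)
        qed
      qed
    next
      case (Assign r' e)
      then show ?thesis using Suc.prems Some pe cj ev[OF vj] by simp
    qed (use Suc.prems Some in auto)
  qed
qed

lemma fuel_ext: "ext s s' \<Longrightarrow> fuel P s \<le> fuel P s'"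
  unfolding fuel_def ext_def by (simp add: sum_mono)

lemma rv_ext:
  assumes "ext s s'" "I1 s" "valid_idx s t i" "rv P s t i r = Some v"
  shows "rv P s' t i r = Some v"
proof -
  have "regval (fuel P s) s' t i r = Some v"
    using regval_ext[OF assms(1,2,3)] assms(4) unfolding rv_def by blast
  then show ?thesis unfolding rv_def by (rule regval_fuel) (rule fuel_ext[OF assms(1)])
qed

lemma addr_ext:
  assumes "ext s s'" "I1 s" "valid_idx s t i" "addr P s t i = Some a"
  shows "addr P s' t i = Some a"
proof -
  have c: "cmd_of s' t i = cmd_of s t i" using assms unfolding ext_def by blast
  have ev: "\<And>e v. eval (rv P s t i) e = Some v \<Longrightarrow> eval (rv P s' t i) e = Some v"
    using eval_mono[of "rv P s t i" "rv P s' t i"] rv_ext[OF assms(1,2,3)] by blast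
  show ?thesis
  proof (cases "cmd_of s t i")
    case (Load r e) then show ?thesis using assms(4) c ev[of e a] unfolding addr_def by simp
  next
    case (Store e e') then show ?thesis using assms(4) c ev[of e a] unfolding addr_def by simp
  qed (use assms(4) c in \<open>simp_all add: addr_def\<close>)
qed

definition Inv :: "('q,'d,'r) pstate \<Rightarrow> bool" where
  "Inv s \<longleftrightarrow> I1 s \<and>
    (\<forall>t a t' i'. prp s t a = St t' i' \<longrightarrow> valid_idx s t' i' \<and> is_store (cmd_of s t' i') \<and> co s (t',i') \<noteq> None) \<and>
    (\<forall>t i. i \<in> C (rt s t) \<longrightarrow> valid_idx s t i) \<and>
    (\<forall>t i. co s (t,i) \<noteq> None \<longrightarrow> i \<in> C (rt s t)) \<and>
    (\<forall>t i. i \<in> C (rt s t) \<and> is_store (cmd_of s t i) \<longrightarrow> co s (t,i) \<noteq> None)"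

lemma Inv_init: "Inv init_state"
  unfolding Inv_def I1_def init_state_def valid_idx_def nF_def by simp

lemma co_of_mono:
  assumes "co s \<subseteq>\<^sub>m co s'" "\<forall>t i. x = St t i \<longrightarrow> co s (t,i) \<noteq> None"
  shows "co_of s' x = co_of s x"
proof (cases x)
  case (Init a) then show ?thesis by simp
next
  case (St t i)
  then obtain k where k: "co s (t,i) = Some k" using assms(2) by blast
  have "co s' (t,i) = Some k" using assms(1) k unfolding map_le_def by force
  then show ?thesis using St k by simp
qed

definition goodstep :: "('q,'d,'r) pstate \<Rightarrow> ('q,'d,'r) pstate \<Rightarrow> bool" where
  "goodstep s s' \<longleftrightarrow> Inv s' \<and> ext s s' \<and> (\<forall>t a. co_of s (prp s t a) \<le> co_of s' (prp s' t a))"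

lemma upd_rt_simps[simp]:
  "rt (upd_rt s t r) = (rt s)(t := r)" "co (upd_rt s t r) = co s" "prp (upd_rt s t r) = prp s"
  by (simp_all add: upd_rt_def)

lemma sameF:
  assumes "\<forall>t. F (rt s' t) = F (rt s t)"
  shows "nF s' = nF s" "valid_idx s' = valid_idx s" "cmd_of s' = cmd_of s"
  using assms by (auto simp: nF_def valid_idx_def cmd_of_def fun_eq_iff)

lemma co_of_eq: "co s' = co s \<Longrightarrow> co_of s' x = co_of s x"
  by (cases x) auto

lemma Inv_frameL:
  assumes inv: "Inv s" and vc: "\<And>t i. valid_idx s t i \<Longrightarrow> valid_idx s' t i \<and> cmd_of s' t i = cmd_of s t i"
    and Lc: "\<And>t i t' i'. L (rt s' t) i = Some (St t' i') \<Longrightarrow> valid_idx s t' i' \<and> is_store (cmd_of s t' i')"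
    and r: "\<And>t. C (rt s' t) = C (rt s t)" "co s' = co s" "prp s' = prp s"
  shows "Inv s'"
  unfolding Inv_def I1_def
  apply (insert inv[unfolded Inv_def I1_def])
  apply (intro conjI allI impI)
  apply (metis vc r Lc)+
  done

lemma InvI:
  assumes "\<And>t i t' i'. L (rt s t) i = Some (St t' i') \<Longrightarrow> valid_idx s t' i' \<and> is_store (cmd_of s t' i')"
    "\<And>t a t' i'. prp s t a = St t' i' \<Longrightarrow> valid_idx s t' i' \<and> is_store (cmd_of s t' i') \<and> co s (t',i') \<noteq> None"
    "\<And>t i. i \<in> C (rt s t) \<Longrightarrow> valid_idx s t i"
    "\<And>t i. co s (t,i) \<noteq> None \<Longrightarrow> i \<in> C (rt s t)"
    "\<And>t i. i \<in> C (rt s t) \<Longrightarrow> is_store (cmd_of s t i) \<Longrightarrow> co s (t,i) \<noteq> None"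
  shows "Inv s"
  using assms unfolding Inv_def I1_def by blast

lemma InvD:
  assumes "Inv s"
  shows "\<And>t i t' i'. L (rt s t) i = Some (St t' i') \<Longrightarrow> valid_idx s t' i' \<and> is_store (cmd_of s t' i')"
    "\<And>t a t' i'. prp s t a = St t' i' \<Longrightarrow> valid_idx s t' i' \<and> is_store (cmd_of s t' i') \<and> co s (t',i') \<noteq> None"
    "\<And>t i. i \<in> C (rt s t) \<Longrightarrow> valid_idx s t i"
    "\<And>t i. co s (t,i) \<noteq> None \<Longrightarrow> i \<in> C (rt s t)"
    "\<And>t i. i \<in> C (rt s t) \<Longrightarrow> is_store (cmd_of s t i) \<Longrightarrow> co s (t,i) \<noteq> None"
  using assms unfolding Inv_def I1_def by blast+

lemma Inv_frame:
  assumes inv: "Inv s" and vc: "\<And>t i. valid_idx s t i \<Longrightarrow> valid_idx s' t i \<and> cmd_of s' t i = cmd_of s t i"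
    and r: "\<And>t. L (rt s' t) = L (rt s t)" "\<And>t. C (rt s' t) = C (rt s t)" "co s' = co s" "prp s' = prp s"
  shows "Inv s'"
  unfolding Inv_def I1_def
  apply (insert inv[unfolded Inv_def I1_def])
  apply (intro conjI allI impI)
  apply (metis vc r)+
  done

lemma step_good:
  assumes st: "step P s e s'" and inv: "Inv s"
  shows "goodstep s s'"
  using st
proof cases
  case (fetch t ins)
  have nf: "\<forall>t0. nF s t0 \<le> nF s' t0" using fetch by (simp add: nF_def)
  have vc: "\<And>t0 i. valid_idx s t0 i \<Longrightarrow> valid_idx s' t0 i \<and> cmd_of s' t0 i = cmd_of s t0 i"
    using fetch by (auto simp: valid_idx_def nF_def cmd_of_def nth_append)
  have r: "\<And>t0. L (rt s' t0) = L (rt s t0)" "\<And>t0. C (rt s' t0) = C (rt s t0)" "co s' = co s" "prp s' = prp s"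
    using fetch by simp_all
  have I: "Inv s'" by (rule Inv_frame[OF inv vc r])
  have E: "ext s s'" unfolding ext_def using nf vc r by simp
  show ?thesis unfolding goodstep_def using I E r co_of_eq[OF r(3)] by simp
next
  case (load_mem t i a)
  note d = load_mem(2)[unfolded load_mem_step_def]
  have sF: "\<forall>t0. F (rt s' t0) = F (rt s t0)" using d by (simp add: upd_rt_def)
  note sf = sameF[OF sF]
  have r: "\<And>t0. C (rt s' t0) = C (rt s t0)" "co s' = co s" "prp s' = prp s" using d by simp_all
  have Lm: "\<And>t0 j. L (rt s' t0) j = (if t0 = t \<and> j = i then Some (prp s t a) else L (rt s t0) j)" using d by auto
  have Lc: "\<And>t0 j t' i'. L (rt s' t0) j = Some (St t' i') \<Longrightarrow> valid_idx s t' i' \<and> is_store (cmd_of s t' i')"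
    using inv d unfolding Lm Inv_def I1_def by (auto split: if_splits)
  have I: "Inv s'" by (rule Inv_frameL[OF inv _ Lc r]) (simp add: sf)
  have E: "ext s s'" unfolding ext_def sf using r Lm d by auto
  show ?thesis unfolding goodstep_def using I E r co_of_eq[OF r(2)] by simp
next
  case (early_read t i a i')
  note d = early_read(2)[unfolded early_read_step_def]
  have sF: "\<forall>t0. F (rt s' t0) = F (rt s t0)" using d by (simp add: upd_rt_def)
  note sf = sameF[OF sF]
  have r: "\<And>t0. C (rt s' t0) = C (rt s t0)" "co s' = co s" "prp s' = prp s" using d by simp_all
  have Lm: "\<And>t0 j. L (rt s' t0) j = (if t0 = t \<and> j = i then Some (St t i') else L (rt s t0) j)" using d by auto
  have Lc: "\<And>t0 j t' i'. L (rt s' t0) j = Some (St t' i') \<Longrightarrow> valid_idx s t' i' \<and> is_store (cmd_of s t' i')"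
    using inv d unfolding Lm Inv_def I1_def by (auto split: if_splits)
  have I: "Inv s'" by (rule Inv_frameL[OF inv _ Lc r]) (simp add: sf)
  have E: "ext s s'" unfolding ext_def sf using r Lm d by auto
  show ?thesis unfolding goodstep_def using I E r co_of_eq[OF r(2)] by simp
next
  case (commit t i)
  have sF: "\<forall>t0. F (rt s' t0) = F (rt s t0)" using commit by (simp add: upd_rt_def)
  note sf = sameF[OF sF]
  have Cq: "\<And>t0 j. j \<in> C (rt s' t0) \<longleftrightarrow> (t0 = t \<and> j = i) \<or> j \<in> C (rt s t0)" using commit by auto
  have r: "\<And>t0. L (rt s' t0) = L (rt s t0)" "co s' = co s" "prp s' = prp s" using commit by simp_all
  have vi: "valid_idx s t i" using commit(3) unfolding commit_enabled_def by blast
  note D = InvD[OF inv]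
  have I: "Inv s'"
  proof (rule InvI)
    show "\<And>t i t' i'. L (rt s' t) i = Some (St t' i') \<Longrightarrow> valid_idx s' t' i' \<and> is_store (cmd_of s' t' i')"
      using D(1) unfolding r sf by blast
    show "\<And>t a t' i'. prp s' t a = St t' i' \<Longrightarrow> valid_idx s' t' i' \<and> is_store (cmd_of s' t' i') \<and> co s' (t',i') \<noteq> None"
      using D(2) unfolding r sf by blast
    show "\<And>t0 j. j \<in> C (rt s' t0) \<Longrightarrow> valid_idx s' t0 j" using D(3) vi unfolding Cq sf by blast
    show "\<And>t0 j. co s' (t0,j) \<noteq> None \<Longrightarrow> j \<in> C (rt s' t0)" using D(4) unfolding Cq r by blast
    show "\<And>t0 j. j \<in> C (rt s' t0) \<Longrightarrow> is_store (cmd_of s' t0 j) \<Longrightarrow> co s' (t0,j) \<noteq> None"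
      using D(5) commit(4) unfolding Cq r sf by blast
  qed
  have E: "ext s s'" unfolding ext_def sf using r Cq by auto
  show ?thesis unfolding goodstep_def using I E r co_of_eq[OF r(2)] by simp
next
  case (commit_store t i a k)
  have sF: "\<forall>t0. F (rt s' t0) = F (rt s t0)" using commit_store by simp
  note sf = sameF[OF sF]
  have Cq: "\<And>t0 j. j \<in> C (rt s' t0) \<longleftrightarrow> (t0 = t \<and> j = i) \<or> j \<in> C (rt s t0)" using commit_store by auto
  have r: "\<And>t0. L (rt s' t0) = L (rt s t0)" using commit_store by simp_all
  have coq: "\<And>t0 j. co s' (t0,j) = (if t0 = t \<and> j = i then Some k else co s (t0,j))" using commit_store by simp
  have prq: "\<And>t0 a0. prp s' t0 a0 = (if t0 = t \<and> a0 = a then St t i else prp s t0 a0)" using commit_store by simp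
  have vi: "valid_idx s t i" and ni: "i \<notin> C (rt s t)" using commit_store(3) unfolding commit_enabled_def by blast+
  note D = InvD[OF inv]
  have cN: "co s (t,i) = None" using D(4) ni by blast
  have le: "co s \<subseteq>\<^sub>m co s'" unfolding map_le_def using cN coq by (auto simp: dom_def)
  have I: "Inv s'"
  proof (rule InvI)
    show "\<And>t i t' i'. L (rt s' t) i = Some (St t' i') \<Longrightarrow> valid_idx s' t' i' \<and> is_store (cmd_of s' t' i')"
      using D(1) unfolding r sf by blast
    show "\<And>t0 a0 t' i'. prp s' t0 a0 = St t' i' \<Longrightarrow> valid_idx s' t' i' \<and> is_store (cmd_of s' t' i') \<and> co s' (t',i') \<noteq> None"
    proof -
      fix t0 a0 t' i' assume h: "prp s' t0 a0 = St t' i'"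
      show "valid_idx s' t' i' \<and> is_store (cmd_of s' t' i') \<and> co s' (t',i') \<noteq> None"
      proof (cases "t0 = t \<and> a0 = a")
        case True
        then show ?thesis using h prq[of t0 a0] vi commit_store(4) coq[of t i] unfolding sf by auto
      next
        case False
        then have "prp s t0 a0 = St t' i'" using h prq[of t0 a0] by (simp split: if_splits)
        then show ?thesis using D(2) coq[of t' i'] unfolding sf by auto
      qed
    qed
    show "\<And>t0 j. j \<in> C (rt s' t0) \<Longrightarrow> valid_idx s' t0 j" using D(3) vi unfolding Cq sf by blast
    show "\<And>t0 j. co s' (t0,j) \<noteq> None \<Longrightarrow> j \<in> C (rt s' t0)" using D(4) unfolding Cq coq by (auto split: if_splits)
    show "\<And>t0 j. j \<in> C (rt s' t0) \<Longrightarrow> is_store (cmd_of s' t0 j) \<Longrightarrow> co s' (t0,j) \<noteq> None"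
      using D(5) unfolding Cq coq sf by (auto split: if_splits)
  qed
  have E: "ext s s'" unfolding ext_def sf using r Cq le by auto
  have M: "co_of s (prp s t0 a0) \<le> co_of s' (prp s' t0 a0)" for t0 a0
  proof (cases "t0 = t \<and> a0 = a")
    case True
    then show ?thesis using commit_store(8) prq[of t0 a0] coq[of t i] by simp
  next
    case False
    have def: "\<forall>t' i'. prp s t0 a0 = St t' i' \<longrightarrow> co s (t',i') \<noteq> None" using D(2) by blast
    from False have "prp s' t0 a0 = prp s t0 a0" using prq[of t0 a0] by (simp only: if_False)
    then show ?thesis using co_of_mono[OF le def] by simp
  qed
  show ?thesis unfolding goodstep_def using I E M by simp
next
  case (propagate t t' i' a)
  have sF: "\<forall>t0. F (rt s' t0) = F (rt s t0)" using propagate by simp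
  note sf = sameF[OF sF]
  have r: "\<And>t0. L (rt s' t0) = L (rt s t0)" "\<And>t0. C (rt s' t0) = C (rt s t0)" "co s' = co s" using propagate by simp_all
  have prq: "\<And>t0 a0. prp s' t0 a0 = (if t0 = t \<and> a0 = a then St t' i' else prp s t0 a0)" using propagate by simp
  note D = InvD[OF inv]
  have I: "Inv s'"
  proof (rule InvI)
    show "\<And>t i t' i'. L (rt s' t) i = Some (St t' i') \<Longrightarrow> valid_idx s' t' i' \<and> is_store (cmd_of s' t' i')"
      using D(1) unfolding r sf by blast
    show "\<And>t0 a0 t2 i2. prp s' t0 a0 = St t2 i2 \<Longrightarrow> valid_idx s' t2 i2 \<and> is_store (cmd_of s' t2 i2) \<and> co s' (t2,i2) \<noteq> None"
    proof -
      fix t0 a0 t2 i2 assume h: "prp s' t0 a0 = St t2 i2"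
      show "valid_idx s' t2 i2 \<and> is_store (cmd_of s' t2 i2) \<and> co s' (t2,i2) \<noteq> None"
      proof (cases "t0 = t \<and> a0 = a")
        case True
        then have "t2 = t'" "i2 = i'" using h prq[of t0 a0] by auto
        then show ?thesis using propagate(5,6,7) D(5)[of i' t'] unfolding sf r by auto
      next
        case False
        then have "prp s t0 a0 = St t2 i2" using h prq[of t0 a0] by (simp split: if_splits)
        then show ?thesis using D(2) unfolding sf r by auto
      qed
    qed
    show "\<And>t0 j. j \<in> C (rt s' t0) \<Longrightarrow> valid_idx s' t0 j" using D(3) unfolding r sf by blast
    show "\<And>t0 j. co s' (t0,j) \<noteq> None \<Longrightarrow> j \<in> C (rt s' t0)" using D(4) unfolding r by blast
    show "\<And>t0 j. j \<in> C (rt s' t0) \<Longrightarrow> is_store (cmd_of s' t0 j) \<Longrightarrow> co s' (t0,j) \<noteq> None"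
      using D(5) unfolding r sf by blast
  qed
  have E: "ext s s'" unfolding ext_def sf using r by auto
  have M: "co_of s (prp s t0 a0) \<le> co_of s' (prp s' t0 a0)" for t0 a0
    using propagate(9) prq[of t0 a0] co_of_eq[OF r(3)] r(3) by (cases "t0 = t \<and> a0 = a") auto
  show ?thesis unfolding goodstep_def using I E M by simp
qed

lemma run_step: "is_run P ss \<sigma> \<Longrightarrow> n < length \<sigma> \<Longrightarrow> step P (ss!n) (\<sigma>!n) (ss!Suc n)"
  unfolding is_run_def by blast

lemma run_Inv: assumes "is_run P ss \<sigma>" shows "n \<le> length \<sigma> \<Longrightarrow> Inv (ss!n)"
proof (induction n)
  case 0 then show ?case using assms Inv_init unfolding is_run_def by simp
next
  case (Suc n)
  then have "n < length \<sigma>" by simp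
  then have "goodstep (ss!n) (ss!Suc n)" using step_good[OF run_step[OF assms] Suc.IH] by simp
  then show ?case unfolding goodstep_def by blast
qed

lemma run_good:
  assumes "is_run P ss \<sigma>" "m \<le> n" "n \<le> length \<sigma>"
  shows "ext (ss!m) (ss!n) \<and> (\<forall>t a. co_of (ss!m) (prp (ss!m) t a) \<le> co_of (ss!n) (prp (ss!n) t a))"
  using assms(2,3)
proof (induction n rule: dec_induct)
  case base then show ?case by (simp add: ext_refl)
next
  case (step k)
  then have k: "k < length \<sigma>" by simp
  have "goodstep (ss!k) (ss!Suc k)" using step_good[OF run_step[OF assms(1) k] run_Inv[OF assms(1)]] k by simp
  then show ?case using step ext_trans unfolding goodstep_def by (meson order_trans Suc_leD)
qed

lemma transition:
  assumes "\<not> Q m" "Q n" "m \<le> n"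
  shows "\<exists>k. m \<le> k \<and> k < n \<and> \<not> Q k \<and> Q (Suc k)"
  using assms(3,2)
proof (induction n rule: dec_induct)
  case base then show ?case using assms(1) by simp
next
  case (step n)
  then show ?case by (cases "Q n") (auto intro: le_SucI)
qed

lemma commit_ident:
  assumes "step P s e s'" "i \<notin> C (rt s t)" "i \<in> C (rt s' t)" "is_store (cmd_of s t i)"
  shows "\<exists>k a. e = ECommitSt t i k a \<and> addr P s t i = Some a \<and> commit_enabled P s t i"
  using assms(1)
proof cases
  case (fetch t ins) then show ?thesis using assms(2,3) by (auto split: if_splits)
next
  case (load_mem t i a) then show ?thesis using assms(2,3) by (auto simp: load_mem_step_def split: if_splits)
next
  case (early_read t i a i') then show ?thesis using assms(2,3) by (auto simp: early_read_step_def split: if_splits)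
next
  case (commit t0 i0) then show ?thesis using assms(2,3,4) by (auto split: if_splits)
next
  case (commit_store t0 i0 a k) then show ?thesis using assms(2,3) by (auto split: if_splits)
next
  case (propagate t t' i' a) then show ?thesis using assms(2,3) by auto
qed

lemma commitst_facts:
  assumes "step P s (ECommitSt t i k a) s'"
  shows "commit_enabled P s t i \<and> is_store (cmd_of s t i) \<and> addr P s t i = Some a \<and>
         co s' (t,i) = Some k \<and> co_of s (prp s t a) < k"
  using assms by cases auto

lemma load_cases:
  assumes "step P s (ELoad t i a) s'"
  shows "load_mem_step P s t i a s' \<or> (\<exists>i'. early_read_step P s t i a i' s')"
  using assms by cases auto

lemma run_ext: "is_run P ss \<sigma> \<Longrightarrow> m \<le> n \<Longrightarrow> n \<le> length \<sigma> \<Longrightarrow> ext (ss!m) (ss!n)"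
  using run_good by blast

lemma run_valid: "is_run P ss \<sigma> \<Longrightarrow> m \<le> n \<Longrightarrow> n \<le> length \<sigma> \<Longrightarrow> valid_idx (ss!m) t i \<Longrightarrow> valid_idx (ss!n) t i"
  using run_ext ext_valid by blast

lemma run_cmd: "is_run P ss \<sigma> \<Longrightarrow> m \<le> n \<Longrightarrow> n \<le> length \<sigma> \<Longrightarrow> valid_idx (ss!m) t i \<Longrightarrow> cmd_of (ss!n) t i = cmd_of (ss!m) t i"
  using run_ext unfolding ext_def by blast

lemma run_C: "is_run P ss \<sigma> \<Longrightarrow> m \<le> n \<Longrightarrow> n \<le> length \<sigma> \<Longrightarrow> i \<in> C (rt (ss!m) t) \<Longrightarrow> i \<in> C (rt (ss!n) t)"
  using run_ext unfolding ext_def by blast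

lemma run_L: "is_run P ss \<sigma> \<Longrightarrow> m \<le> n \<Longrightarrow> n \<le> length \<sigma> \<Longrightarrow> L (rt (ss!m) t) i = Some x \<Longrightarrow> L (rt (ss!n) t) i = Some x"
  using run_ext unfolding ext_def by blast

lemma run_co: "is_run P ss \<sigma> \<Longrightarrow> m \<le> n \<Longrightarrow> n \<le> length \<sigma> \<Longrightarrow> co (ss!m) \<subseteq>\<^sub>m co (ss!n)"
  using run_ext unfolding ext_def by blast

lemma run_addr:
  assumes "is_run P ss \<sigma>" "m \<le> n" "n \<le> length \<sigma>" "valid_idx (ss!m) t i" "addr P (ss!m) t i = Some a"
  shows "addr P (ss!n) t i = Some a"
proof -
  have "I1 (ss!m)" using run_Inv[OF assms(1)] assms(2,3) unfolding Inv_def by simp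
  then show ?thesis using addr_ext run_ext assms by blast
qed

lemma map_le_Some: "m1 \<subseteq>\<^sub>m m2 \<Longrightarrow> m1 x = Some y \<Longrightarrow> m2 x = Some y"
  unfolding map_le_def by force

lemma fwd:
  assumes run: "is_run P ss \<sigma>" and fin: "final P (ss ! length \<sigma>)" and re: "reads_early P ss \<sigma> t i i'"
  shows "\<exists>\<sigma>1 \<sigma>2 \<sigma>3 k a. \<sigma> = \<sigma>1 @ [ELoad t i a] @ \<sigma>2 @ [ECommitSt t i' k a] @ \<sigma>3 \<and>
       i' \<in> {1..i - 1} \<and>
       (\<forall>j k'. j \<in> {i' + 1..i - 1} \<longrightarrow> ECommitSt t j k' a \<notin> set \<sigma>3)"
proof -
  obtain n a where n: "n < length \<sigma>" and en: "\<sigma>!n = ELoad t i a"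
    and er: "early_read_step P (ss!n) t i a i' (ss!Suc n)" using re unfolding reads_early_def by blast
  from er have tid: "is_tid P t" and vi: "valid_idx (ss!n) t i" and vi': "valid_idx (ss!n) t i'" and lt: "i' < i"
    and st': "is_store (cmd_of (ss!n) t i')"
    and btw: "\<forall>j. i' < j \<and> j < i \<and> is_store (cmd_of (ss!n) t j) \<longrightarrow> addr P (ss!n) t j \<noteq> Some a \<and> addr P (ss!n) t j \<noteq> None"
    and ad': "addr P (ss!n) t i' = Some a" and nc: "i' \<notin> C (rt (ss!n) t)"
    unfolding early_read_step_def by blast+
  have vN: "valid_idx (ss!length \<sigma>) t i'" using run_valid[OF run _ _ vi'] n by simp
  have cN: "i' \<in> C (rt (ss ! length \<sigma>) t)" using fin tid vN unfolding final_def by blast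
  obtain m where m: "n \<le> m" "m < length \<sigma>" "i' \<notin> C (rt (ss!m) t)" "i' \<in> C (rt (ss!Suc m) t)"
    using transition[of "\<lambda>k. i' \<in> C (rt (ss!k) t)" n "length \<sigma>"] nc cN n by auto
  have stm: "is_store (cmd_of (ss!m) t i')" using run_cmd[OF run m(1) _ vi'] m(2) st' by simp
  obtain k a' where ev: "\<sigma>!m = ECommitSt t i' k a'" and am: "addr P (ss!m) t i' = Some a'"
    using commit_ident[OF run_step[OF run m(2)] m(3) m(4) stm] by blast
  have "addr P (ss!m) t i' = Some a" using run_addr[OF run m(1) _ vi' ad'] m(2) by simp
  hence a': "a' = a" using am by simp
  have "n \<noteq> m" using en ev by auto
  hence nm: "n < m" using m(1) by simp
  define \<sigma>1 where "\<sigma>1 = take n \<sigma>"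
  define \<sigma>2 where "\<sigma>2 = take (m - Suc n) (drop (Suc n) \<sigma>)"
  define \<sigma>3 where "\<sigma>3 = drop (Suc m) \<sigma>"
  have d1: "\<sigma> = take n \<sigma> @ \<sigma>!n # drop (Suc n) \<sigma>" using n by (simp add: id_take_nth_drop)
  have e1: "drop (Suc n) \<sigma> ! (m - Suc n) = \<sigma> ! m" using nm m(2) by simp
  have e2: "drop (Suc (m - Suc n)) (drop (Suc n) \<sigma>) = drop (Suc m) \<sigma>" using nm by simp
  have d2: "drop (Suc n) \<sigma> = take (m - Suc n) (drop (Suc n) \<sigma>) @ \<sigma>!m # drop (Suc m) \<sigma>"
    using id_take_nth_drop[of "m - Suc n" "drop (Suc n) \<sigma>"] nm m(2) e1 e2 by simp
  have dec: "\<sigma> = \<sigma>1 @ [ELoad t i a] @ \<sigma>2 @ [ECommitSt t i' k a] @ \<sigma>3"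
    unfolding \<sigma>1_def \<sigma>2_def \<sigma>3_def using d1 d2 en ev a' by (metis append_Cons append_Nil)
  have ir: "i' \<in> {1..i - 1}" using vi' lt by (auto simp: valid_idx_def)
  have no: "\<forall>j k'. j \<in> {i' + 1..i - 1} \<longrightarrow> ECommitSt t j k' a \<notin> set \<sigma>3"
  proof (intro allI impI notI)
    fix j k' assume j: "j \<in> {i' + 1..i - 1}" and inn: "ECommitSt t j k' a \<in> set \<sigma>3"
    then obtain q where q: "q < length \<sigma>3" "\<sigma>3 ! q = ECommitSt t j k' a" by (auto simp: in_set_conv_nth)
    define p where "p = Suc m + q"
    have p: "p < length \<sigma>" and ep: "\<sigma>!p = ECommitSt t j k' a" using q unfolding \<sigma>3_def p_def by auto
    have cf: "is_store (cmd_of (ss!p) t j) \<and> addr P (ss!p) t j = Some a"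
      using commitst_facts[of P "ss!p" t j k' a "ss!Suc p"] run_step[OF run p] ep by simp
    have np: "n \<le> p" using nm unfolding p_def by simp
    have vj: "valid_idx (ss!n) t j" using vi j lt by (auto simp: valid_idx_def)
    have "cmd_of (ss!p) t j = cmd_of (ss!n) t j" using run_cmd[OF run np _ vj] p by simp
    then have "is_store (cmd_of (ss!n) t j)" using cf by simp
    moreover have "i' < j \<and> j < i" using j lt by auto
    ultimately have "addr P (ss!n) t j \<noteq> Some a \<and> addr P (ss!n) t j \<noteq> None" using btw by blast
    then obtain b where b: "addr P (ss!n) t j = Some b" "b \<noteq> a" by (cases "addr P (ss!n) t j") auto
    have "addr P (ss!p) t j = Some b" using run_addr[OF run np _ vj b(1)] p by simp
    then show False using cf b(2) by simp
  qed
  show ?thesis using dec ir no by blast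
qed

lemma load_mem_facts: "load_mem_step P s t i a s' \<Longrightarrow> is_tid P t \<and> valid_idx s t i \<and> is_load (cmd_of s t i) \<and> addr P s t i = Some a"
  unfolding load_mem_step_def by blast

lemma early_facts: "early_read_step P s t i a i' s' \<Longrightarrow> is_tid P t \<and> valid_idx s t i \<and> is_load (cmd_of s t i) \<and> addr P s t i = Some a"
  unfolding early_read_step_def by blast

lemma ce_clause:
  assumes "commit_enabled P s t i" "is_store (cmd_of s t i)"
  shows "\<forall>j. valid_idx s t j \<and> j < i \<and> is_mem (cmd_of s t j) \<and>
             (addr P s t j = addr P s t i \<or> addr P s t j = None) \<longrightarrow> j \<in> C (rt s t)"
proof -
  have "is_mem (cmd_of s t i)" using assms(2) by (simp add: is_mem_def)
  then show ?thesis using assms(1) unfolding commit_enabled_def by blast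
qed

lemma ce_basic: "commit_enabled P s t i \<Longrightarrow> valid_idx s t i \<and> i \<notin> C (rt s t)"
  by (simp add: commit_enabled_def)

lemma bwd:
  assumes run: "is_run P ss \<sigma>" and fin: "final P (ss ! length \<sigma>)"
    and dec: "\<sigma> = \<sigma>1 @ [ELoad t i a] @ \<sigma>2 @ [ECommitSt t i' k a] @ \<sigma>3"
    and ir: "i' \<in> {1..i - 1}"
    and no: "\<forall>j k'. j \<in> {i' + 1..i - 1} \<longrightarrow> ECommitSt t j k' a \<notin> set \<sigma>3"
  shows "reads_early P ss \<sigma> t i i'"
proof -
  define n where "n = length \<sigma>1"
  define p where "p = Suc (n + length \<sigma>2)"
  have n: "n < length \<sigma>" and en: "\<sigma>!n = ELoad t i a" unfolding n_def using dec by simp_all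
  have p: "p < length \<sigma>" and ep: "\<sigma>!p = ECommitSt t i' k a" unfolding p_def n_def using dec by (simp_all add: nth_append)
  have np: "n < p" unfolding p_def by simp
  have s3: "\<sigma>3 = drop (Suc p) \<sigma>" unfolding p_def n_def using dec by simp
  have stepn: "step P (ss!n) (ELoad t i a) (ss!Suc n)" using run_step[OF run n] unfolding en .
  have cf: "commit_enabled P (ss!p) t i' \<and> is_store (cmd_of (ss!p) t i') \<and> addr P (ss!p) t i' = Some a \<and>
         co (ss!Suc p) (t,i') = Some k \<and> co_of (ss!p) (prp (ss!p) t a) < k"
    using commitst_facts[OF run_step[OF run p, unfolded ep]] .
  have ncp: "i' \<notin> C (rt (ss!p) t)" using cf ce_basic by blast
  have lf: "is_tid P t \<and> valid_idx (ss!n) t i \<and> is_load (cmd_of (ss!n) t i) \<and> addr P (ss!n) t i = Some a"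
    using load_cases[OF stepn] load_mem_facts early_facts by blast
  have vi': "valid_idx (ss!n) t i'" using lf ir by (auto simp: valid_idx_def)
  have ilt: "i' < i" using ir lf by (auto simp: valid_idx_def)
  have cmdp: "cmd_of (ss!p) t i' = cmd_of (ss!n) t i'" using run_cmd[OF run less_imp_le[OF np] less_imp_le[OF p] vi'] .
  have stn: "is_store (cmd_of (ss!n) t i')" using cf cmdp by simp
  note lc = load_cases[OF stepn]
  show ?thesis
  proof (cases "load_mem_step P (ss!n) t i a (ss!Suc n)")
    case True
    define x where "x = prp (ss!n) t a"
    have Lx: "L (rt (ss!Suc n) t) i = Some x" using True unfolding load_mem_step_def x_def by simp
    define N where "N = length \<sigma>"
    have LN: "L (rt (ss!N) t) i = Some x" using run_L[OF run Suc_leI[OF n] order_refl Lx] unfolding N_def .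
    have vNi: "valid_idx (ss!N) t i" and vNi': "valid_idx (ss!N) t i'"
      using run_valid[OF run less_imp_le[OF n] order_refl vi'] run_valid[OF run less_imp_le[OF n] order_refl conjunct1[OF conjunct2[OF lf]]] unfolding N_def by - assumption+
    have cNi: "cmd_of (ss!N) t i = cmd_of (ss!n) t i" using run_cmd[OF run less_imp_le[OF n] order_refl conjunct1[OF conjunct2[OF lf]]] unfolding N_def .
    have cNi': "cmd_of (ss!N) t i' = cmd_of (ss!n) t i'" using run_cmd[OF run less_imp_le[OF n] order_refl vi'] unfolding N_def .
    have vin: "valid_idx (ss!n) t i" and adn: "addr P (ss!n) t i = Some a" using lf by blast+
    have aNi: "addr P (ss!N) t i = Some a" using run_addr[OF run less_imp_le[OF n] order_refl vin adn] unfolding N_def .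
    have vpi': "valid_idx (ss!p) t i'" using cf ce_basic by blast
    have aNi': "addr P (ss!N) t i' = Some a" using run_addr[OF run less_imp_le[OF p] order_refl vpi'] cf unfolding N_def by blast
    have F3: "\<forall>i' i. valid_idx (ss!N) t i' \<and> valid_idx (ss!N) t i \<and> i' < i \<and>
        is_store (cmd_of (ss!N) t i') \<and> is_load (cmd_of (ss!N) t i) \<and> addr P (ss!N) t i' = addr P (ss!N) t i \<longrightarrow>
        co_of (ss!N) (St t i') \<le> co_of (ss!N) (the (L (rt (ss!N) t) i))"
      using fin lf unfolding final_def N_def by blast
    have cond: "valid_idx (ss!N) t i' \<and> valid_idx (ss!N) t i \<and> i' < i \<and>
        is_store (cmd_of (ss!N) t i') \<and> is_load (cmd_of (ss!N) t i) \<and> addr P (ss!N) t i' = addr P (ss!N) t i"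
      using vNi vNi' ilt stn cNi cNi' aNi aNi' lf by simp
    have "co_of (ss!N) (St t i') \<le> co_of (ss!N) (the (L (rt (ss!N) t) i))"
      using F3 cond by blast
    hence le1: "co_of (ss!N) (St t i') \<le> co_of (ss!N) x" using LN by simp
    have "co (ss!N) (t,i') = Some k" using map_le_Some[OF run_co[OF run, of "Suc p" N]] p cf unfolding N_def by simp
    hence kk: "co_of (ss!N) (St t i') = k" by simp
    have InvN: "Inv (ss!n)" using run_Inv[OF run] n by simp
    have def: "\<forall>t' i2. x = St t' i2 \<longrightarrow> co (ss!n) (t',i2) \<noteq> None" using InvD(2)[OF InvN] unfolding x_def by blast
    have "co_of (ss!N) x = co_of (ss!n) x" using co_of_mono[OF run_co[OF run, of n N] def] n unfolding N_def by simp
    moreover have "co_of (ss!n) x \<le> co_of (ss!p) (prp (ss!p) t a)" using run_good[OF run, of n p] np p unfolding x_def by simp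
    ultimately show ?thesis using le1 kk cf by simp
  next
    case False
    then obtain i'' where er: "early_read_step P (ss!n) t i a i'' (ss!Suc n)" using lc by blast
    from er have vi'': "valid_idx (ss!n) t i''" and lt'': "i'' < i" and st'': "is_store (cmd_of (ss!n) t i'')"
      and btw: "\<forall>j. i'' < j \<and> j < i \<and> is_store (cmd_of (ss!n) t j) \<longrightarrow> addr P (ss!n) t j \<noteq> Some a \<and> addr P (ss!n) t j \<noteq> None"
      and ad'': "addr P (ss!n) t i'' = Some a" and nc'': "i'' \<notin> C (rt (ss!n) t)"
      unfolding early_read_step_def by blast+
    consider "i'' = i'" | "i'' < i'" | "i' < i''" by linarith
    then show ?thesis
    proof cases
      case 1
      then show ?thesis unfolding reads_early_def using n en er by blast
    next
      case 2
      then have "addr P (ss!n) t i' \<noteq> Some a \<and> addr P (ss!n) t i' \<noteq> None" using btw ilt stn by blast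
      then obtain b where b: "addr P (ss!n) t i' = Some b" "b \<noteq> a" by (cases "addr P (ss!n) t i'") auto
      have "addr P (ss!p) t i' = Some b" using run_addr[OF run less_imp_le[OF np] less_imp_le[OF p] vi' b(1)] .
      then show ?thesis using cf b(2) by simp
    next
      case 3
      have tid: "is_tid P t" using lf by blast
      have vN: "valid_idx (ss!length \<sigma>) t i''" using run_valid[OF run less_imp_le[OF n] order_refl vi''] .
      have cN: "i'' \<in> C (rt (ss ! length \<sigma>) t)" using fin tid vN unfolding final_def by blast
      obtain m where m: "n \<le> m" "m < length \<sigma>" "i'' \<notin> C (rt (ss!m) t)" "i'' \<in> C (rt (ss!Suc m) t)"
        using transition[of "\<lambda>k. i'' \<in> C (rt (ss!k) t)" n "length \<sigma>"] nc'' cN n by auto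
      have stm: "is_store (cmd_of (ss!m) t i'')" using run_cmd[OF run m(1) less_imp_le[OF m(2)] vi''] st'' by simp
      obtain k2 a2 where ev: "\<sigma>!m = ECommitSt t i'' k2 a2" and am: "addr P (ss!m) t i'' = Some a2"
        and ce: "commit_enabled P (ss!m) t i''"
        using commit_ident[OF run_step[OF run m(2)] m(3) m(4) stm] by blast
      have "addr P (ss!m) t i'' = Some a" using run_addr[OF run m(1) less_imp_le[OF m(2)] vi'' ad''] .
      hence a2: "a2 = a" using am by simp
      have vmi': "valid_idx (ss!m) t i'" using run_valid[OF run m(1) less_imp_le[OF m(2)] vi'] .
      have memi': "is_mem (cmd_of (ss!m) t i')" using run_cmd[OF run m(1) less_imp_le[OF m(2)] vi'] stn by (simp add: is_mem_def)
      have cimp: "addr P (ss!m) t i' = Some a \<or> addr P (ss!m) t i' = None \<Longrightarrow> i' \<in> C (rt (ss!m) t)"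
      proof -
        assume h: "addr P (ss!m) t i' = Some a \<or> addr P (ss!m) t i' = None"
        have "addr P (ss!m) t i' = addr P (ss!m) t i'' \<or> addr P (ss!m) t i' = None" using h am a2 by auto
        then show ?thesis using ce_clause[OF ce stm] vmi' memi' 3 by blast
      qed
      have pm: "p < m"
      proof (rule ccontr)
        assume "\<not> p < m"
        hence mp: "m \<le> p" by simp
        have "addr P (ss!m) t i' = Some a \<or> addr P (ss!m) t i' = None"
        proof (cases "addr P (ss!m) t i'")
          case (Some b)
          have "addr P (ss!p) t i' = Some b" using run_addr[OF run mp less_imp_le[OF p] vmi' Some] .
          then show ?thesis using cf Some by simp
        qed simp
        hence "i' \<in> C (rt (ss!m) t)" by (rule cimp)
        hence "i' \<in> C (rt (ss!p) t)" using run_C[OF run mp] p by simp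
        then show False using ncp by simp
      qed
      have q1: "m - Suc p < length \<sigma>3" unfolding s3 using pm m(2) by simp
      have q2: "\<sigma>3 ! (m - Suc p) = \<sigma>!m" unfolding s3 using pm m(2) by simp
      have "\<sigma>!m \<in> set \<sigma>3" using nth_mem[OF q1] q2 by simp
      moreover have "i'' \<in> {i' + 1..i - 1}" using 3 lt'' by auto
      ultimately have "ECommitSt t i'' k2 a \<in> set \<sigma>3" "i'' \<in> {i' + 1..i - 1}" using ev a2 by simp_all
      then show ?thesis using no by blast
    qed
  qed
qed

theorem lemma4:
  fixes P :: "('q, 'd::{zero,finite}, 'r::finite) program"
    and \<sigma> :: "('q, 'd, 'r) event list"
    and ss :: "('q, 'd, 'r) pstate list"
  assumes "\<forall>T\<in>set P. finite (ttrans T)"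
    and "\<sigma> \<in> C_Power P"
    and "is_run P ss \<sigma>" and "final P (last ss)"
  shows "reads_early P ss \<sigma> t i i' \<longleftrightarrow>
    (\<exists>\<sigma>1 \<sigma>2 \<sigma>3 k a. \<sigma> = \<sigma>1 @ [ELoad t i a] @ \<sigma>2 @ [ECommitSt t i' k a] @ \<sigma>3 \<and>
       i' \<in> {1..i - 1} \<and>
       (\<forall>j k'. j \<in> {i' + 1..i - 1} \<longrightarrow> ECommitSt t j k' a \<notin> set \<sigma>3))"
proof -
  have "last ss = ss ! length \<sigma>" using assms(3) unfolding is_run_def
    by (metis diff_Suc_1 last_conv_nth list.size(3) nat.distinct(1))
  hence fin: "final P (ss ! length \<sigma>)" using assms(4) by simp
  show ?thesis
  proof
    assume "reads_early P ss \<sigma> t i i'"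
    then show "\<exists>\<sigma>1 \<sigma>2 \<sigma>3 k a. \<sigma> = \<sigma>1 @ [ELoad t i a] @ \<sigma>2 @ [ECommitSt t i' k a] @ \<sigma>3 \<and>
       i' \<in> {1..i - 1} \<and> (\<forall>j k'. j \<in> {i' + 1..i - 1} \<longrightarrow> ECommitSt t j k' a \<notin> set \<sigma>3)"
      by (rule fwd[OF assms(3) fin])
  next
    assume "\<exists>\<sigma>1 \<sigma>2 \<sigma>3 k a. \<sigma> = \<sigma>1 @ [ELoad t i a] @ \<sigma>2 @ [ECommitSt t i' k a] @ \<sigma>3 \<and>
       i' \<in> {1..i - 1} \<and> (\<forall>j k'. j \<in> {i' + 1..i - 1} \<longrightarrow> ECommitSt t j k' a \<notin> set \<sigma>3)"
    then obtain \<sigma>1 \<sigma>2 \<sigma>3 k a where "\<sigma> = \<sigma>1 @ [ELoad t i a] @ \<sigma>2 @ [ECommitSt t i' k a] @ \<sigma>3"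
       "i' \<in> {1..i - 1}" "\<forall>j k'. j \<in> {i' + 1..i - 1} \<longrightarrow> ECommitSt t j k' a \<notin> set \<sigma>3" by blast
    then show "reads_early P ss \<sigma> t i i'" by (rule bwd[OF assms(3) fin])
  qed
qed

end
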